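(* Let $\mathbf{F}=(F_1,\ldots,F_d)$ be a vector of $d$ pairwise distinct (non-isomorphic) finite simple graphs with no isolated vertices, and let $n_0\ge\max\{|F_1|,\ldots,|F_d|\}$. Then for every $n\ge n_0$, the curvy zonotope $Z_{\mathbf{F};n}$ is not contained in any affine hyperplane of $\mathbb{R}^d$.
   Context: $|F|$ is the number of vertices of $F$. For a positive integer $n$, a graph $F$, and real variables $\mathbf{x}=(x_{ij})_{i,j\in[n]}$ with $x_{ij}=x_{ji}$, let \[ p_{F;n}(\mathbf{x})= \frac{1}{n^{|F|}} \sum_{\phi : V(F) \rightarrow [n]} \,\, \prod_{ij \in E(F)} x_{\phi(i)\phi(j)},\] the sum over all maps $\phi:V(F)\to[n]$. The curvy zonotope is \[ Z_{\mathbf{F};n} = \left\{ (p_{F_1;n}(\mathbf{x}), \ldots, p_{F_d;n}(\mathbf{x})) \mid \mathbf{x} \in [0,1]^{n^2},\ x_{ij}=x_{ji} \text{ for all } i,j \right\}\subseteq\mathbb{R}^d. \] *)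

theory Defs
  imports Main "HOL-Library.FuncSet" Complex_Main
begin

text \<open>A finite simple graph on the vertex set {0..<k}: edges are stored as pairs (i,j) with i < j < k.\<close>
type_synonym graph = "nat \<times> (nat \<times> nat) set"

definition nverts :: "graph \<Rightarrow> nat" where
  "nverts F = fst F"

definition edges :: "graph \<Rightarrow> (nat \<times> nat) set" where
  "edges F = snd F"

definition adj :: "graph \<Rightarrow> nat \<Rightarrow> nat \<Rightarrow> bool" where
  "adj F i j \<longleftrightarrow> (i, j) \<in> edges F \<or> (j, i) \<in> edges F"

definition simple_graph :: "graph \<Rightarrow> bool" where
  "simple_graph F \<longleftrightarrow> 0 < nverts F \<and> (\<forall>(i, j) \<in> edges F. i < j \<and> j < nverts F)"

definition no_isolated :: "graph \<Rightarrow> bool" where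
  "no_isolated F \<longleftrightarrow> (\<forall>v < nverts F. \<exists>u < nverts F. adj F v u)"

definition graph_iso :: "graph \<Rightarrow> graph \<Rightarrow> bool" where
  "graph_iso F G \<longleftrightarrow> (\<exists>f. bij_betw f {..<nverts F} {..<nverts G} \<and>
      (\<forall>i < nverts F. \<forall>j < nverts F. adj F i j \<longleftrightarrow> adj G (f i) (f j)))"

definition hom_poly :: "graph \<Rightarrow> nat \<Rightarrow> (nat \<Rightarrow> nat \<Rightarrow> real) \<Rightarrow> real" where
  "hom_poly F n x = (1 / real n ^ nverts F) *
     (\<Sum>\<phi> \<in> {..<nverts F} \<rightarrow>\<^sub>E {..<n}. \<Prod>(i, j) \<in> edges F. x (\<phi> i) (\<phi> j))"

definition admissible :: "nat \<Rightarrow> (nat \<Rightarrow> nat \<Rightarrow> real) \<Rightarrow> bool" where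
  "admissible n x \<longleftrightarrow> (\<forall>i < n. \<forall>j < n. 0 \<le> x i j \<and> x i j \<le> 1 \<and> x i j = x j i)"

definition curvy_zonotope :: "graph list \<Rightarrow> nat \<Rightarrow> real list set" where
  "curvy_zonotope Fs n = {map (\<lambda>F. hom_poly F n x) Fs | x. admissible n x}"

definition affine_hyperplane :: "nat \<Rightarrow> real list set \<Rightarrow> bool" where
  "affine_hyperplane d H \<longleftrightarrow> (\<exists>a b. (\<exists>l < d. a l \<noteq> (0::real)) \<and>
      H = {y. length y = d \<and> (\<Sum>l < d. a l * y ! l) = b})"

end

theory Submission
  imports Defs
begin

definition eimg :: "graph \<Rightarrow> (nat \<Rightarrow> nat) \<Rightarrow> (nat \<times> nat) set" where
  "eimg F \<phi> = (\<lambda>(i,j). (min (\<phi> i) (\<phi> j), max (\<phi> i) (\<phi> j))) ` edges F"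

definition ind :: "(nat \<times> nat) set \<Rightarrow> nat \<Rightarrow> nat \<Rightarrow> real" where
  "ind S u v = (if (min u v, max u v) \<in> S then 1 else 0)"

definition surj_cnt :: "graph \<Rightarrow> nat \<Rightarrow> (nat \<times> nat) set \<Rightarrow> real" where
  "surj_cnt F n T = (\<Sum>\<phi>\<in>{..<nverts F} \<rightarrow>\<^sub>E {..<n}. if eimg F \<phi> = T then 1 else 0)"

lemma prod_ind:
  assumes "finite E"
  shows "(\<Prod>e\<in>E. (if P e then 1 else 0::real)) = (if \<forall>e\<in>E. P e then 1 else 0)"
proof (cases "\<forall>e\<in>E. P e")
  case True then show ?thesis by simp
next
  case False
  then obtain e where "e \<in> E" "\<not> P e" by blast
  then show ?thesis using assms False by (simp add: prod_zero)
qed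

lemma simple_finite: "simple_graph F \<Longrightarrow> finite (edges F)"
proof -
  assume "simple_graph F"
  then have "edges F \<subseteq> {..<nverts F} \<times> {..<nverts F}"
    unfolding simple_graph_def by auto
  then show ?thesis by (rule finite_subset) auto
qed

lemma hom_ind:
  assumes "finite (edges F)" "finite S"
  shows "hom_poly F n (ind S) = (1 / real n ^ nverts F) * (\<Sum>T\<in>Pow S. surj_cnt F n T)"
proof -
  have 1: "(\<Prod>(i, j)\<in>edges F. ind S (\<phi> i) (\<phi> j)) = (if eimg F \<phi> \<subseteq> S then 1 else 0)" for \<phi>
  proof -
    have "(\<Prod>(i, j)\<in>edges F. ind S (\<phi> i) (\<phi> j))
        = (\<Prod>e\<in>edges F. if (\<lambda>(i,j). (min (\<phi> i) (\<phi> j), max (\<phi> i) (\<phi> j)) \<in> S) e then 1 else 0)"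
      by (rule prod.cong) (auto simp: ind_def)
    also have "\<dots> = (if \<forall>e\<in>edges F. (\<lambda>(i,j). (min (\<phi> i) (\<phi> j), max (\<phi> i) (\<phi> j)) \<in> S) e then 1 else 0)"
      by (rule prod_ind[OF assms(1)])
    also have "\<dots> = (if eimg F \<phi> \<subseteq> S then 1 else 0)"
      unfolding eimg_def by auto
    finally show ?thesis .
  qed
  have 2: "(if eimg F \<phi> \<subseteq> S then 1 else 0::real) = (\<Sum>T\<in>Pow S. if eimg F \<phi> = T then 1 else 0)" for \<phi>
    using assms(2) by (simp add: sum.delta)
  have "hom_poly F n (ind S) = (1 / real n ^ nverts F) *
     (\<Sum>\<phi> \<in> {..<nverts F} \<rightarrow>\<^sub>E {..<n}. \<Sum>T\<in>Pow S. if eimg F \<phi> = T then 1 else 0)"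
    unfolding hom_poly_def using 1 2 by simp
  also have "\<dots> = (1 / real n ^ nverts F) * (\<Sum>T\<in>Pow S. surj_cnt F n T)"
    unfolding surj_cnt_def by (subst sum.swap) simp
  finally show ?thesis .
qed

lemma iso_lemma:
  assumes s1: "simple_graph G" and n1: "no_isolated G"
    and s2: "simple_graph F" and n2: "no_isolated F"
    and le: "nverts G \<le> nverts F" and e: "eimg G \<phi> = edges F"
  shows "graph_iso G F"
proof -
  define k' where "k' = nverts G"
  define k where "k = nverts F"
  have eG: "\<And>i j. (i,j) \<in> edges G \<Longrightarrow> i < j \<and> j < k'" using s1 unfolding simple_graph_def k'_def by auto
  have eF: "\<And>i j. (i,j) \<in> edges F \<Longrightarrow> i < j \<and> j < k" using s2 unfolding simple_graph_def k_def by auto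
  have mem: "(i,j) \<in> edges G \<Longrightarrow> (min (\<phi> i) (\<phi> j), max (\<phi> i) (\<phi> j)) \<in> edges F" for i j
    using e[symmetric] unfolding eimg_def by force
  have sub: "\<phi> ` {..<k'} \<subseteq> {..<k}"
  proof
    fix w assume "w \<in> \<phi> ` {..<k'}"
    then obtain v where v: "v < k'" "w = \<phi> v" by auto
    then obtain u where "u < k'" "adj G v u" using n1 unfolding no_isolated_def k'_def by auto
    then have "(v,u) \<in> edges G \<or> (u,v) \<in> edges G" unfolding adj_def by auto
    then show "w \<in> {..<k}"
    proof
      assume "(v,u) \<in> edges G"
      from eF[OF mem[OF this]] show ?thesis using v by (auto simp: min_def max_def split: if_splits)
    next
      assume "(u,v) \<in> edges G"
      from eF[OF mem[OF this]] show ?thesis using v by (auto simp: min_def max_def split: if_splits)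
    qed
  qed
  have sup: "{..<k} \<subseteq> \<phi> ` {..<k'}"
  proof
    fix w assume "w \<in> {..<k}"
    then obtain u where "adj F w u" using n2 unfolding no_isolated_def k_def by auto
    then have "(w,u) \<in> eimg G \<phi> \<or> (u,w) \<in> eimg G \<phi>" unfolding adj_def e by auto
    then obtain i j where ij: "(i,j) \<in> edges G"
      "(w,u) = (min (\<phi> i) (\<phi> j), max (\<phi> i) (\<phi> j)) \<or> (u,w) = (min (\<phi> i) (\<phi> j), max (\<phi> i) (\<phi> j))"
      unfolding eimg_def by auto
    then have "w = \<phi> i \<or> w = \<phi> j" by (auto simp: min_def max_def split: if_splits)
    moreover have "i < k'" "j < k'" using eG[OF ij(1)] by auto
    ultimately show "w \<in> \<phi> ` {..<k'}" by auto
  qed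
  have img: "\<phi> ` {..<k'} = {..<k}" using sub sup by auto
  have "card (\<phi> ` {..<k'}) = card {..<k'}"
  proof (rule antisym)
    show "card (\<phi> ` {..<k'}) \<le> card {..<k'}" by (rule card_image_le) simp
    show "card {..<k'} \<le> card (\<phi> ` {..<k'})" using img le k_def k'_def by simp
  qed
  then have inj: "inj_on \<phi> {..<k'}" by (simp add: inj_on_iff_eq_card)
  have bij: "bij_betw \<phi> {..<k'} {..<k}" using inj img by (simp add: bij_betw_def)
  have adjeq: "adj G i j \<longleftrightarrow> adj F (\<phi> i) (\<phi> j)" if "i < k'" "j < k'" for i j
  proof
    assume "adj G i j"
    then have "(i,j) \<in> edges G \<or> (j,i) \<in> edges G" unfolding adj_def .
    then show "adj F (\<phi> i) (\<phi> j)"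
    proof
      assume "(i,j) \<in> edges G"
      from mem[OF this] show ?thesis unfolding adj_def
        by (cases "\<phi> i \<le> \<phi> j") (auto simp: min_def max_def)
    next
      assume "(j,i) \<in> edges G"
      from mem[OF this] show ?thesis unfolding adj_def
        by (cases "\<phi> j \<le> \<phi> i") (auto simp: min_def max_def)
    qed
  next
    assume "adj F (\<phi> i) (\<phi> j)"
    then have "(\<phi> i, \<phi> j) \<in> eimg G \<phi> \<or> (\<phi> j, \<phi> i) \<in> eimg G \<phi>" unfolding adj_def e .
    then obtain i' j' where ij: "(i',j') \<in> edges G"
      "(\<phi> i, \<phi> j) = (min (\<phi> i') (\<phi> j'), max (\<phi> i') (\<phi> j')) \<or> (\<phi> j, \<phi> i) = (min (\<phi> i') (\<phi> j'), max (\<phi> i') (\<phi> j'))"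
      unfolding eimg_def by auto
    then have "(\<phi> i' = \<phi> i \<and> \<phi> j' = \<phi> j) \<or> (\<phi> i' = \<phi> j \<and> \<phi> j' = \<phi> i)"
      by (auto simp: min_def max_def split: if_splits)
    moreover have "i' < k'" "j' < k'" using eG[OF ij(1)] by auto
    ultimately have "(i' = i \<and> j' = j) \<or> (i' = j \<and> j' = i)"
      using inj that unfolding inj_on_def by auto
    then show "adj G i j" using ij(1) unfolding adj_def by auto
  qed
  show ?thesis unfolding graph_iso_def using bij adjeq k_def k'_def by blast
qed

lemma surj_id:
  assumes "simple_graph F" "nverts F \<le> n"
  shows "1 \<le> surj_cnt F n (edges F)"
proof -
  define \<phi> where "\<phi> = restrict id {..<nverts F}"
  have "\<phi> \<in> {..<nverts F} \<rightarrow>\<^sub>E {..<n}" using assms(2) unfolding \<phi>_def by auto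
  moreover have "eimg F \<phi> = edges F"
  proof -
    have "\<And>i j. (i,j) \<in> edges F \<Longrightarrow> i < j \<and> j < nverts F"
      using assms(1) unfolding simple_graph_def by auto
    then have "\<And>e. e \<in> edges F \<Longrightarrow> (\<lambda>(i,j). (min (\<phi> i) (\<phi> j), max (\<phi> i) (\<phi> j))) e = e"
      unfolding \<phi>_def by fastforce
    then show ?thesis unfolding eimg_def by (simp add: image_cong)
  qed
  ultimately have "(if eimg F \<phi> = edges F then 1 else 0::real)
      \<le> (\<Sum>\<phi>\<in>{..<nverts F} \<rightarrow>\<^sub>E {..<n}. if eimg F \<phi> = edges F then 1 else 0)"
    by (intro member_le_sum) (auto simp: finite_PiE)
  then show ?thesis unfolding surj_cnt_def using \<open>eimg F \<phi> = edges F\<close> by simp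
qed

theorem theorem4p6:
  fixes Fs :: "graph list" and n0 n :: nat
  assumes graphs: "\<forall>F \<in> set Fs. simple_graph F \<and> no_isolated F"
    and distinct: "\<forall>k < length Fs. \<forall>l < length Fs. k \<noteq> l \<longrightarrow> \<not> graph_iso (Fs ! k) (Fs ! l)"
    and n0: "\<forall>F \<in> set Fs. nverts F \<le> n0"
    and n: "n0 \<le> n"
  shows "\<not> (\<exists>H. affine_hyperplane (length Fs) H \<and> curvy_zonotope Fs n \<subseteq> H)"
proof
  assume "\<exists>H. affine_hyperplane (length Fs) H \<and> curvy_zonotope Fs n \<subseteq> H"
  then obtain H a b where l0: "\<exists>l < length Fs. a l \<noteq> (0::real)"
    and H: "H = {y. length y = length Fs \<and> (\<Sum>l < length Fs. a l * y ! l) = b}"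
    and Z: "curvy_zonotope Fs n \<subseteq> H"
    unfolding affine_hyperplane_def by blast
  define d where "d = length Fs"
  have G: "\<And>l. l < d \<Longrightarrow> simple_graph (Fs ! l) \<and> no_isolated (Fs ! l) \<and> nverts (Fs ! l) \<le> n"
    using graphs n0 n unfolding d_def by (meson nth_mem order_trans)
  have fin: "\<And>l. l < d \<Longrightarrow> finite (edges (Fs ! l))" using G simple_finite by blast
  have eq: "(\<Sum>l<d. a l * hom_poly (Fs ! l) n (ind S)) = b" for S
  proof -
    have "admissible n (ind S)" unfolding admissible_def ind_def by (auto simp: min.commute max.commute)
    then have "map (\<lambda>F. hom_poly F n (ind S)) Fs \<in> H" using Z unfolding curvy_zonotope_def by blast
    then show ?thesis unfolding H d_def by simp
  qed
  define c where "c l = a l / real n ^ nverts (Fs ! l)" for l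
  define h where "h T = (\<Sum>l<d. c l * surj_cnt (Fs ! l) n T) - (if T = {} then b else 0)" for T
  have sumh: "(\<Sum>T\<in>Pow S. h T) = 0" if "finite S" for S
  proof -
    have "(\<Sum>T\<in>Pow S. \<Sum>l<d. c l * surj_cnt (Fs ! l) n T) = (\<Sum>l<d. c l * (\<Sum>T\<in>Pow S. surj_cnt (Fs ! l) n T))"
      by (subst sum.swap) (simp add: sum_distrib_left)
    also have "\<dots> = (\<Sum>l<d. a l * hom_poly (Fs ! l) n (ind S))"
      by (rule sum.cong) (auto simp: hom_ind[OF fin that] c_def)
    also have "\<dots> = b" by (rule eq)
    finally have A: "(\<Sum>T\<in>Pow S. \<Sum>l<d. c l * surj_cnt (Fs ! l) n T) = b" .
    have B: "(\<Sum>T\<in>Pow S. (if T = {} then b else 0)) = b" using that by (simp add: sum.delta)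
    show ?thesis unfolding h_def sum_subtractf using A B by simp
  qed
  have hz: "finite S \<Longrightarrow> h S = 0" for S
  proof (induction S rule: finite_psubset_induct)
    case (psubset S)
    have "(\<Sum>T\<in>Pow S. h T) = h S + (\<Sum>T\<in>Pow S - {S}. h T)"
      using psubset(1) by (simp add: sum.remove[of "Pow S" S])
    moreover have "(\<Sum>T\<in>Pow S - {S}. h T) = 0"
      by (rule sum.neutral) (auto intro!: psubset(2))
    ultimately show ?case using sumh[OF psubset(1)] by simp
  qed
  define L where "L = {l. l < d \<and> a l \<noteq> 0}"
  have Lfin: "finite L" "L \<noteq> {}" using l0 unfolding L_def d_def by auto
  define m where "m = Max ((\<lambda>l. nverts (Fs ! l)) ` L)"
  have "m \<in> (\<lambda>l. nverts (Fs ! l)) ` L"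
    unfolding m_def using Lfin by (intro Max_in) auto
  then obtain l0 where l0L: "l0 \<in> L" and l0m: "nverts (Fs ! l0) = m" by blast
  have lem: "\<And>l. l \<in> L \<Longrightarrow> nverts (Fs ! l) \<le> m" unfolding m_def using Lfin by auto
  have l0d: "l0 < d" "a l0 \<noteq> 0" using l0L unfolding L_def by auto
  define E0 where "E0 = edges (Fs ! l0)"
  have E0fin: "finite E0" using fin l0d unfolding E0_def by auto
  have E0ne: "E0 \<noteq> {}"
  proof -
    have "0 < nverts (Fs ! l0)" using G[OF l0d(1)] unfolding simple_graph_def by auto
    then obtain u where "adj (Fs ! l0) 0 u" using G[OF l0d(1)] unfolding no_isolated_def by auto
    then show ?thesis unfolding adj_def E0_def by auto
  qed
  have zero: "c l * surj_cnt (Fs ! l) n E0 = 0" if "l < d" "l \<noteq> l0" for l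
  proof (cases "a l = 0")
    case True then show ?thesis by (simp add: c_def)
  next
    case False
    then have "l \<in> L" using that unfolding L_def by auto
    have "surj_cnt (Fs ! l) n E0 = 0" unfolding surj_cnt_def
    proof (rule sum.neutral, rule ballI)
      fix \<phi> assume "\<phi> \<in> {..<nverts (Fs ! l)} \<rightarrow>\<^sub>E {..<n}"
      show "(if eimg (Fs ! l) \<phi> = E0 then 1 else 0) = (0::real)"
      proof (rule ccontr)
        assume "(if eimg (Fs ! l) \<phi> = E0 then 1 else 0) \<noteq> (0::real)"
        then have "eimg (Fs ! l) \<phi> = edges (Fs ! l0)" unfolding E0_def by (simp split: if_splits)
        then have "graph_iso (Fs ! l) (Fs ! l0)"
          using iso_lemma G[OF that(1)] G[OF l0d(1)] lem[OF \<open>l \<in> L\<close>] l0m by blast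
        then show False using distinct that l0d unfolding d_def by blast
      qed
    qed
    then show ?thesis by simp
  qed
  have "(\<Sum>l<d. c l * surj_cnt (Fs ! l) n E0) = c l0 * surj_cnt (Fs ! l0) n E0 + (\<Sum>l\<in>{..<d} - {l0}. c l * surj_cnt (Fs ! l) n E0)"
    using l0d by (simp add: sum.remove)
  also have "(\<Sum>l\<in>{..<d} - {l0}. c l * surj_cnt (Fs ! l) n E0) = 0"
    by (rule sum.neutral) (use zero in auto)
  finally have S: "(\<Sum>l<d. c l * surj_cnt (Fs ! l) n E0) = c l0 * surj_cnt (Fs ! l0) n E0" by simp
  have "h E0 = 0" using hz E0fin by blast
  then have "c l0 * surj_cnt (Fs ! l0) n E0 = 0" using S E0ne unfolding h_def by simp
  moreover have "1 \<le> surj_cnt (Fs ! l0) n E0" unfolding E0_def using surj_id G[OF l0d(1)] by blast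
  moreover have "c l0 \<noteq> 0"
  proof -
    have "0 < nverts (Fs ! l0)" using G[OF l0d(1)] unfolding simple_graph_def by auto
    then have "0 < n" using G[OF l0d(1)] by linarith
    then show ?thesis using l0d(2) unfolding c_def by simp
  qed
  ultimately show False by simp
qed

end
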